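(* Let $\mathbf{V}$ be an $N\times N$ random Vandermonde matrix whose phases $\theta_1,\ldots,\theta_N$ are i.i.d. with distribution $\nu$ having a continuous density $f$ on $[0,1]$. Then $$\mathbb{E}\Big(\mathrm{tr}_N\log(\mathbf{V}^*\mathbf{V})\Big)=(N-1)\,\mathbb{E}\Big(\log\big|e^{2\pi i\theta_1}-e^{2\pi i\theta_2}\big|\Big)-\log N,$$ where $\theta_1,\theta_2$ are independent with distribution $\nu$.
   Context: For phases $\theta_1,\ldots,\theta_L\in[0,1]$, the $N\times L$ Vandermonde matrix $\mathbf{V}$ has entries $V(j,q)=\frac{1}{\sqrt N}e^{2\pi i (j-1)\theta_q}$, $j=1,\ldots,N$, $q=1,\ldots,L$; it is random when the phases are random. $\mathrm{tr}_N(\mathbf{A})=\frac1N\sum_{i}a_{ii}$ is the normalized trace, and $\log(\mathbf{V}^*\mathbf{V})$ is the matrix logarithm of the (almost surely positive definite) Hermitian matrix $\mathbf{V}^*\mathbf{V}$. *)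

theory Defs
  imports "HOL-Probability.Probability" "Jordan_Normal_Form.Schur_Decomposition"
begin

definition mat_trace :: "complex mat \<Rightarrow> complex" where
  "mat_trace A = (\<Sum>i<dim_row A. A $$ (i, i))"

definition tr_N :: "complex mat \<Rightarrow> complex" where
  "tr_N A = mat_trace A / of_nat (dim_row A)"

definition real_diag_mat :: "nat \<Rightarrow> (nat \<Rightarrow> real) \<Rightarrow> complex mat" where
  "real_diag_mat n d = mat n n (\<lambda>(i, j). if i = j then complex_of_real (d i) else 0)"

text \<open>Matrix logarithm of a Hermitian positive definite matrix, defined through the
  spectral theorem: if A = U diag(d) U^* with U unitary and all d_i > 0, then
  log A = U diag(ln d) U^*.  (Outside Hermitian positive definite matrices the value
  is unspecified.)\<close>
definition matrix_log :: "complex mat \<Rightarrow> complex mat" where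
  "matrix_log A = (SOME L. \<exists>U d.
      U \<in> carrier_mat (dim_row A) (dim_row A) \<and>
      mat_adjoint U * U = 1\<^sub>m (dim_row A) \<and>
      (\<forall>i < dim_row A. d i > 0) \<and>
      A = U * real_diag_mat (dim_row A) d * mat_adjoint U \<and>
      L = U * real_diag_mat (dim_row A) (\<lambda>i. ln (d i)) * mat_adjoint U)"

text \<open>The N x L Vandermonde matrix with phases theta_0, ..., theta_{L-1}
  (0-based indices): V(j,q) = exp(2 pi i j theta_q) / sqrt N.\<close>
definition vandermonde :: "nat \<Rightarrow> nat \<Rightarrow> (nat \<Rightarrow> real) \<Rightarrow> complex mat" where
  "vandermonde N L \<theta> = mat N L (\<lambda>(j, q).
      exp (2 * of_real pi * \<i> * of_nat j * of_real (\<theta> q)) / of_real (sqrt (real N)))"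

end

theory Submission
  imports Defs
begin

lemma mult_idx: "i < dim_row A \<Longrightarrow> j < dim_col B \<Longrightarrow> dim_col A = dim_row B \<Longrightarrow>
  (A * B) $$ (i,j) = (\<Sum>k<dim_col A. A $$ (i,k) * B $$ (k,j))"
  by (simp add: index_mult_mat scalar_prod_def atLeast0LessThan)

lemma adj_dim[simp]: "dim_row (mat_adjoint A) = dim_col A" "dim_col (mat_adjoint A) = dim_row A"
  by (auto simp: mat_adjoint_def)

lemma adj_idx[simp]: "i < dim_col A \<Longrightarrow> j < dim_row A \<Longrightarrow> mat_adjoint A $$ (i,j) = cnj (A $$ (j,i))"
  by (simp add: mat_adjoint_def mat_of_rows_def)

lemma adj_carrier[simp]: "A \<in> carrier_mat m n \<Longrightarrow> mat_adjoint A \<in> carrier_mat n m"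
  by (metis adj_dim carrier_matD carrier_matI)

lemma adj_adj[simp]: "mat_adjoint (mat_adjoint (A::complex mat)) = A"
  by (rule eq_matI) simp_all

lemma adj_one[simp]: "mat_adjoint (1\<^sub>m n :: complex mat) = 1\<^sub>m n"
  by (rule eq_matI) simp_all

lemma adj_zero[simp]: "mat_adjoint (0\<^sub>m n m :: complex mat) = 0\<^sub>m m n"
  by (rule eq_matI) simp_all

lemma adj_mult: assumes "A \<in> carrier_mat m n" "B \<in> carrier_mat n p"
  shows "mat_adjoint (A * B :: complex mat) = mat_adjoint B * mat_adjoint A"
proof (rule eq_matI)
  fix i j assume ij: "i < dim_row (mat_adjoint B * mat_adjoint A)" "j < dim_col (mat_adjoint B * mat_adjoint A)"
  then show "mat_adjoint (A * B) $$ (i, j) = (mat_adjoint B * mat_adjoint A) $$ (i, j)"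
  proof -
    have i: "i < p" and j: "j < m" using ij assms by auto
    have "mat_adjoint (A * B) $$ (i, j) = cnj ((A * B) $$ (j, i))" using i j assms by simp
    also have "(A * B) $$ (j, i) = (\<Sum>k<n. A $$ (j,k) * B $$ (k,i))"
      using i j assms by (subst mult_idx) auto
    also have "(mat_adjoint B * mat_adjoint A) $$ (i, j) = (\<Sum>k<n. mat_adjoint B $$ (i,k) * mat_adjoint A $$ (k,j))"
      using i j assms by (subst mult_idx) auto
    ultimately show ?thesis using i j assms by (simp add: mult.commute)
  qed
qed (use assms in auto)

lemma adj_four_block: assumes "A \<in> carrier_mat n1 m1" "B \<in> carrier_mat n1 m2" "C \<in> carrier_mat n2 m1" "D \<in> carrier_mat n2 m2"
  shows "mat_adjoint (four_block_mat A B C D :: complex mat) =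
    four_block_mat (mat_adjoint A) (mat_adjoint C) (mat_adjoint B) (mat_adjoint D)"
proof (rule eq_matI)
  fix i j assume ij: "i < dim_row (four_block_mat (mat_adjoint A) (mat_adjoint C) (mat_adjoint B) (mat_adjoint D))"
     "j < dim_col (four_block_mat (mat_adjoint A) (mat_adjoint C) (mat_adjoint B) (mat_adjoint D))"
  then show "mat_adjoint (four_block_mat A B C D) $$ (i, j) = four_block_mat (mat_adjoint A) (mat_adjoint C) (mat_adjoint B) (mat_adjoint D) $$ (i, j)"
    using assms by (simp add: index_mat_four_block)
qed (use assms in auto)

lemma cscalar_self: "(w::complex vec) \<bullet>c w = of_real (\<Sum>k<dim_vec w. (cmod (vec_index w k))\<^sup>2)"
proof -
  have "w \<bullet>c w = (\<Sum>k<dim_vec w. vec_index w k * cnj (vec_index w k))"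
    by (simp add: scalar_prod_def atLeast0LessThan)
  also have "\<dots> = (\<Sum>k<dim_vec w. of_real ((cmod (vec_index w k))\<^sup>2))"
    by (intro sum.cong refl) (rule complex_norm_square[symmetric])
  finally show ?thesis by simp
qed

lemma unitary_ext:
  fixes v :: "complex vec"
  assumes v: "v \<in> carrier_vec n" and v0: "v \<noteq> 0\<^sub>v n"
  shows "\<exists>W c. W \<in> carrier_mat n n \<and> mat_adjoint W * W = 1\<^sub>m n \<and> c \<noteq> 0 \<and> col W 0 = c \<cdot>\<^sub>v v"
proof -
  have n: "n > 0" using v v0 by (metis carrier_vecD eq_vecI gr0I index_zero_vec(2) less_nat_zero_code)
  interpret cof_vec_space n "TYPE(complex)" .
  define b where "b = basis_completion v"
  define ws where "ws = gram_schmidt n b"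
  from basis_completion[OF v v0, folded b_def]
  have dist_b: "distinct b" and indep: "\<not> lin_dep (set b)" and b: "set b \<subseteq> carrier_vec n"
    and hdb: "hd b = v" and len_b: "length b = n" by (auto simp: basis_def)
  from hdb len_b n obtain vs where bv: "b = v # vs" by (cases b, auto)
  from gram_schmidt_result[OF b dist_b indep refl, folded ws_def]
  have ws: "set ws \<subseteq> carrier_vec n" "corthogonal ws" "length ws = n"
    by (auto simp: len_b)
  from gram_schmidt_hd[OF v, of vs, folded bv] have hdws: "hd ws = v" unfolding ws_def .
  have ws0: "ws ! 0 = v" using hdws ws(3) n by (cases ws) auto
  define r where "r i = sqrt (Re (ws ! i \<bullet>c ws ! i))" for i
  have wsc: "ws ! i \<in> carrier_vec n" if "i < n" for i using ws that by auto
  have selfpos: "ws ! i \<bullet>c ws ! i = of_real ((r i)\<^sup>2) \<and> r i > 0" if "i < n" for i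
  proof -
    have ne: "ws ! i \<bullet>c ws ! i \<noteq> 0" using ws(2) that ws(3) unfolding corthogonal_def by auto
    have eq: "ws ! i \<bullet>c ws ! i = of_real (\<Sum>k<dim_vec (ws ! i). (cmod (vec_index (ws ! i) k))\<^sup>2)" by (rule cscalar_self)
    have ge: "(\<Sum>k<dim_vec (ws ! i). (cmod (vec_index (ws ! i) k))\<^sup>2) \<ge> 0" by (intro sum_nonneg) auto
    have gt: "(\<Sum>k<dim_vec (ws ! i). (cmod (vec_index (ws ! i) k))\<^sup>2) > 0" using ne ge eq by (metis less_eq_real_def of_real_0)
    show ?thesis unfolding r_def using eq gt by simp
  qed
  define us where "us = map (\<lambda>i. complex_of_real (1 / r i) \<cdot>\<^sub>v ws ! i) [0..<n]"
  define W where "W = mat_of_cols n us"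
  have lus: "length us = n" unfolding us_def by simp
  have Wc: "W \<in> carrier_mat n n" unfolding W_def using lus by (metis mat_of_cols_carrier(1))
  have Widx: "W $$ (k, i) = complex_of_real (1 / r i) * vec_index (ws ! i) k" if "k < n" "i < n" for k i
    using that wsc[OF that(2)] unfolding W_def us_def mat_of_cols_def by simp
  have WW: "mat_adjoint W * W = 1\<^sub>m n"
  proof (rule eq_matI)
    fix i j assume "i < dim_row (1\<^sub>m n :: complex mat)" "j < dim_col (1\<^sub>m n :: complex mat)"
    then have i: "i < n" and j: "j < n" by auto
    have "(mat_adjoint W * W) $$ (i, j) = (\<Sum>k<n. mat_adjoint W $$ (i,k) * W $$ (k,j))"
      using Wc i j by (subst mult_idx) auto
    also have "\<dots> = (\<Sum>k<n. complex_of_real (1 / r i) * complex_of_real (1 / r j) * (vec_index (ws ! j) k * cnj (vec_index (ws ! i) k)))"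
      using Wc i j by (intro sum.cong refl) (auto simp: Widx)
    also have "\<dots> = complex_of_real (1 / r i) * complex_of_real (1 / r j) * (ws ! j \<bullet>c ws ! i)"
      using wsc[OF i] wsc[OF j] by (simp add: sum_distrib_left scalar_prod_def atLeast0LessThan)
    also have "\<dots> = 1\<^sub>m n $$ (i, j)"
    proof (cases "i = j")
      case True
      then show ?thesis using selfpos[OF i] i by (simp add: power2_eq_square)
    next
      case False
      then have "ws ! j \<bullet>c ws ! i = 0" using ws(2) ws(3) i j unfolding corthogonal_def by auto
      then show ?thesis using False i j by simp
    qed
    finally show "(mat_adjoint W * W) $$ (i, j) = 1\<^sub>m n $$ (i, j)" .
  qed (use Wc in auto)
  have col0: "col W 0 = complex_of_real (1 / r 0) \<cdot>\<^sub>v v"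
    by (rule eq_vecI) (use Wc n v ws0 in \<open>auto simp: Widx\<close>)
  have "complex_of_real (1 / r 0) \<noteq> 0" using selfpos[OF n] by simp
  then show ?thesis using Wc WW col0 by blast
qed

lemma block_mult:
  assumes X: "X \<in> carrier_mat 1 1" and Y: "Y \<in> carrier_mat 1 n" and Z: "Z \<in> carrier_mat n n"
    and X': "X' \<in> carrier_mat 1 1" and Y': "Y' \<in> carrier_mat 1 n" and Z': "Z' \<in> carrier_mat n n"
  shows "four_block_mat X Y (0\<^sub>m n 1) Z * four_block_mat X' Y' (0\<^sub>m n 1) Z' =
    four_block_mat (X * X') (X * Y' + Y * Z') (0\<^sub>m n 1 :: 'a :: comm_ring_1 mat) (Z * Z')"
proof -
  have "four_block_mat X Y (0\<^sub>m n 1) Z * four_block_mat X' Y' (0\<^sub>m n 1) Z' =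
    four_block_mat (X * X' + Y * 0\<^sub>m n 1) (X * Y' + Y * Z') (0\<^sub>m n 1 * X' + Z * 0\<^sub>m n 1) (0\<^sub>m n 1 * Y' + Z * Z')"
    by (rule mult_four_block_mat[OF X Y zero_carrier_mat Z X' Y' zero_carrier_mat Z'])
  also have "Y * 0\<^sub>m n 1 = 0\<^sub>m 1 1" using Y by simp
  also have "X * X' + 0\<^sub>m 1 1 = X * X'" using X X' by simp
  also have "0\<^sub>m n 1 * X' = 0\<^sub>m n 1" using X' by simp
  also have "Z * 0\<^sub>m n 1 = 0\<^sub>m n 1" using Z by simp
  also have "0\<^sub>m n 1 * Y' = 0\<^sub>m n n" using Y' by simp
  also have "0\<^sub>m n n + Z * Z' = Z * Z'" using Z Z' by simp
  finally show ?thesis by simp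
qed

lemma unitary_schur:
  fixes A :: "complex mat"
  assumes "A \<in> carrier_mat n n"
  shows "\<exists>U T. U \<in> carrier_mat n n \<and> T \<in> carrier_mat n n \<and> mat_adjoint U * U = 1\<^sub>m n \<and>
     U * mat_adjoint U = 1\<^sub>m n \<and> upper_triangular T \<and> A = U * T * mat_adjoint U"
  using assms
proof (induct n arbitrary: A)
  case 0
  then show ?case
    by (intro exI[of _ "1\<^sub>m 0"] exI[of _ A]) (auto simp: upper_triangular_def)
next
  case (Suc n A)
  have A: "A \<in> carrier_mat (Suc n) (Suc n)" by fact
  obtain es where cp: "char_poly A = (\<Prod>a\<leftarrow>es. [:- a, 1:])" and les: "length es = Suc n"
    using char_poly_factorized[OF A] by auto
  then obtain e es' where ees: "es = e # es'" by (cases es) auto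
  have ev: "eigenvalue A e" unfolding eigenvalue_root_char_poly[OF A] cp ees by simp
  define v where "v = find_eigenvector A e"
  from find_eigenvector[OF A ev] have "eigenvector A v e" unfolding v_def .
  then have v: "v \<in> carrier_vec (Suc n)" and v0: "v \<noteq> 0\<^sub>v (Suc n)" and Av: "A *\<^sub>v v = e \<cdot>\<^sub>v v"
    using A unfolding eigenvector_def by auto
  obtain W c where W: "W \<in> carrier_mat (Suc n) (Suc n)" and WW: "mat_adjoint W * W = 1\<^sub>m (Suc n)"
    and c: "c \<noteq> 0" and colW: "col W 0 = c \<cdot>\<^sub>v v"
    using unitary_ext[OF v v0] by blast
  have WW': "W * mat_adjoint W = 1\<^sub>m (Suc n)"
    using mat_mult_left_right_inverse[OF adj_carrier[OF W] W WW] .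
  define A' where "A' = mat_adjoint W * A * W"
  have A': "A' \<in> carrier_mat (Suc n) (Suc n)" unfolding A'_def using W A by auto
  have colAW: "col (A * W) 0 = e \<cdot>\<^sub>v col W 0"
  proof -
    have "col (A * W) 0 = A *\<^sub>v col W 0" by (rule col_mult2[OF A W]) simp
    also have "\<dots> = c \<cdot>\<^sub>v (e \<cdot>\<^sub>v v)" by (simp add: colW mult_mat_vec[OF A v] Av)
    also have "\<dots> = e \<cdot>\<^sub>v col W 0" by (simp add: colW smult_smult_assoc mult.commute)
    finally show ?thesis .
  qed
  have colA': "col A' 0 = e \<cdot>\<^sub>v unit_vec (Suc n) 0"
  proof -
    have "A' = mat_adjoint W * (A * W)" unfolding A'_def by (rule assoc_mult_mat[OF adj_carrier[OF W] A W])
    then have "col A' 0 = mat_adjoint W *\<^sub>v col (A * W) 0" using W A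
      by (simp only: col_mult2[OF adj_carrier[OF W] mult_carrier_mat[OF A W] zero_less_Suc])
    also have "\<dots> = e \<cdot>\<^sub>v (mat_adjoint W *\<^sub>v col W 0)"
      by (subst colAW, rule mult_mat_vec[OF adj_carrier[OF W] col_carrier_vec[OF zero_less_Suc W]])
    also have "mat_adjoint W *\<^sub>v col W 0 = col (mat_adjoint W * W) 0" using W
      by (simp only: col_mult2[OF adj_carrier[OF W] W zero_less_Suc])
    also have "\<dots> = unit_vec (Suc n) 0" by (simp add: WW)
    finally show ?thesis .
  qed
  obtain A1 A2 A0 A3 where splitA': "split_block A' 1 1 = (A1,A2,A0,A3)"
    by (cases "split_block A' 1 1", auto)
  from A' have "dim_row A' = 1 + n" "dim_col A' = 1 + n" by auto
  from split_block[OF splitA' this] have A1: "A1 \<in> carrier_mat 1 1" and A2: "A2 \<in> carrier_mat 1 n"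
    and A0: "A0 \<in> carrier_mat n 1" and A3: "A3 \<in> carrier_mat n n"
    and A'block: "A' = four_block_mat A1 A2 A0 A3" by auto
  have A0z: "A0 = 0\<^sub>m n 1"
  proof (rule eq_matI)
    fix i j assume ij: "i < dim_row (0\<^sub>m n 1 :: complex mat)" "j < dim_col (0\<^sub>m n 1 :: complex mat)"
    then have "A0 $$ (i, j) = A' $$ (Suc i, 0)" using A1 A2 A0 A3 unfolding A'block by auto
    also have "\<dots> = vec_index (col A' 0) (Suc i)" using A' ij by auto
    also have "\<dots> = 0" using ij by (simp add: colA')
    finally show "A0 $$ (i, j) = 0\<^sub>m n 1 $$ (i, j)" using ij by simp
  qed (use A0 in auto)
  from Suc(1)[OF A3] obtain U3 T3 where U3: "U3 \<in> carrier_mat n n" and T3: "T3 \<in> carrier_mat n n"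
    and U3U3: "mat_adjoint U3 * U3 = 1\<^sub>m n" and U3U3': "U3 * mat_adjoint U3 = 1\<^sub>m n"
    and ut3: "upper_triangular T3" and A3eq: "A3 = U3 * T3 * mat_adjoint U3" by blast
  define B where "B = four_block_mat (1\<^sub>m 1) (0\<^sub>m 1 n) (0\<^sub>m n 1) U3"
  define B' where "B' = four_block_mat (1\<^sub>m 1) (0\<^sub>m 1 n) (0\<^sub>m n 1) (mat_adjoint U3)"
  define T where "T = four_block_mat A1 (A2 * U3) (0\<^sub>m n 1) T3"
  have Bc: "B \<in> carrier_mat (Suc n) (Suc n)" unfolding B_def using U3 by (metis four_block_carrier_mat one_carrier_mat plus_1_eq_Suc)
  have B'c: "B' \<in> carrier_mat (Suc n) (Suc n)" unfolding B'_def using U3 by (metis adj_carrier four_block_carrier_mat one_carrier_mat plus_1_eq_Suc)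
  have Tc: "T \<in> carrier_mat (Suc n) (Suc n)" unfolding T_def using A1 T3 by (metis four_block_carrier_mat plus_1_eq_Suc)
  have adjB: "mat_adjoint B = B'" unfolding B_def B'_def using U3 by (subst adj_four_block) auto
  have BB: "B' * B = 1\<^sub>m (Suc n)"
    unfolding B_def B'_def using U3
    by (subst block_mult) (auto simp: U3U3 four_block_one_mat)
  have BTB: "B * T * B' = A'"
  proof -
    have "B * T = four_block_mat (1\<^sub>m 1 * A1) (1\<^sub>m 1 * (A2 * U3) + 0\<^sub>m 1 n * T3) (0\<^sub>m n 1) (U3 * T3)"
      unfolding B_def T_def using U3 A1 A2 T3 by (intro block_mult) auto
    also have "\<dots> = four_block_mat A1 (A2 * U3) (0\<^sub>m n 1) (U3 * T3)"
      using A1 A2 U3 T3 by simp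
    finally have BT: "B * T = four_block_mat A1 (A2 * U3) (0\<^sub>m n 1) (U3 * T3)" .
    have "B * T * B' = four_block_mat (A1 * 1\<^sub>m 1) (A1 * 0\<^sub>m 1 n + A2 * U3 * mat_adjoint U3) (0\<^sub>m n 1) (U3 * T3 * mat_adjoint U3)"
      unfolding BT B'_def using U3 A1 A2 T3 by (intro block_mult) auto
    also have "A2 * U3 * mat_adjoint U3 = A2"
      using A2 by (simp add: assoc_mult_mat[OF A2 U3 adj_carrier[OF U3]] U3U3')
    also have "A1 * 0\<^sub>m 1 n + A2 = A2" using A1 A2 by simp
    also have "A1 * 1\<^sub>m 1 = A1" using A1 by simp
    finally show ?thesis unfolding A'block A0z A3eq .
  qed
  define sq where "sq X = (X \<in> carrier_mat (Suc n) (Suc n))" for X :: "complex mat"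
  have sqm: "sq X \<Longrightarrow> sq Y \<Longrightarrow> sq (X * Y)" for X Y unfolding sq_def by simp
  have asc: "sq X \<Longrightarrow> sq Y \<Longrightarrow> sq Z \<Longrightarrow> X * Y * Z = X * (Y * Z)" for X Y Z
    unfolding sq_def by (rule assoc_mult_mat)
  have sqs: "sq W" "sq (mat_adjoint W)" "sq A" "sq B" "sq B'" "sq T" unfolding sq_def using W A Bc B'c Tc by auto
  define U where "U = W * B"
  have Uc: "U \<in> carrier_mat (Suc n) (Suc n)" unfolding U_def using W Bc by simp
  have adjU: "mat_adjoint U = B' * mat_adjoint W" unfolding U_def using W Bc adjB by (simp add: adj_mult)
  have UU: "mat_adjoint U * U = 1\<^sub>m (Suc n)"
  proof -
    have "mat_adjoint U * U = B' * (mat_adjoint W * W) * B" unfolding adjU unfolding U_def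
      by (simp only: asc sqm sqs)
    also have "\<dots> = 1\<^sub>m (Suc n)" using BB B'c Bc by (simp add: WW)
    finally show ?thesis .
  qed
  have UU': "U * mat_adjoint U = 1\<^sub>m (Suc n)"
    using mat_mult_left_right_inverse[OF adj_carrier[OF Uc] Uc UU] .
  have ut: "upper_triangular T"
  proof (rule upper_triangularI)
    fix i j assume ji: "j < i" and i: "i < dim_row T"
    then have i': "i < Suc n" using Tc by auto
    show "T $$ (i, j) = 0"
    proof (cases "j = 0")
      case True
      then show ?thesis unfolding T_def using ji i' A1 A2 T3 by auto
    next
      case False
      then have "T $$ (i, j) = T3 $$ (i - 1, j - 1)" unfolding T_def using ji i' A1 A2 T3 by auto
      also have "\<dots> = 0" using ut3 T3 ji i' False by (intro upper_triangularD) auto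
      finally show ?thesis .
    qed
  qed
  have Wa: "mat_adjoint W \<in> carrier_mat (Suc n) (Suc n)" using W by simp
  have "U * T * mat_adjoint U = W * (B * T * B') * mat_adjoint W"
    unfolding adjU unfolding U_def by (simp only: asc sqm sqs)
  also have "\<dots> = (W * mat_adjoint W) * A * (W * mat_adjoint W)"
    unfolding BTB A'_def by (simp only: asc sqm sqs)
  also have "\<dots> = A" using A by (simp add: WW')
  finally have "A = U * T * mat_adjoint U" ..
  then show ?case using Uc Tc UU UU' ut by blast
qed

lemma prod_list_upt: "prod_list (map f [0..<n]) = (\<Prod>i<n. f i)"
  by (induct n) auto

lemma cnj_hom: "comm_ring_hom cnj"
  by unfold_locales auto

lemma det_adj: assumes "M \<in> carrier_mat n n" shows "Determinant.det (mat_adjoint M) = cnj (Determinant.det M)"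
proof -
  have "mat_adjoint M = transpose_mat (map_mat cnj M)"
    by (rule eq_matI) auto
  then show ?thesis using assms
    by (simp add: det_transpose[of _ n] comm_ring_hom.hom_det[OF cnj_hom])
qed

lemma rdm_carrier[simp]: "real_diag_mat n d \<in> carrier_mat n n"
  by (simp add: real_diag_mat_def)

lemma rdm_dim[simp]: "dim_row (real_diag_mat n d) = n" "dim_col (real_diag_mat n d) = n"
  by (auto simp: real_diag_mat_def)

lemma det_rdm: "Determinant.det (real_diag_mat n d) = of_real (\<Prod>i<n. d i)"
proof -
  have "Determinant.det (real_diag_mat n d) = prod_list (diag_mat (real_diag_mat n d))"
    by (rule det_upper_triangular) (auto simp: real_diag_mat_def upper_triangular_def)
  also have "\<dots> = (\<Prod>i<n. complex_of_real (d i))"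
    by (simp add: diag_mat_def real_diag_mat_def prod_list_upt)
  finally show ?thesis by simp
qed

lemma trace_conj: assumes U: "U \<in> carrier_mat n n" and UU: "mat_adjoint U * U = 1\<^sub>m n"
  shows "mat_trace (U * real_diag_mat n g * mat_adjoint U) = of_real (\<Sum>i<n. g i)"
proof -
  have ent: "(U * real_diag_mat n g * mat_adjoint U) $$ (i, i) = (\<Sum>k<n. of_real (g k) * (cnj (U $$ (i,k)) * U $$ (i,k)))"
    if i: "i < n" for i
  proof -
    have "(U * real_diag_mat n g * mat_adjoint U) $$ (i, i) = (\<Sum>l<n. (U * real_diag_mat n g) $$ (i,l) * mat_adjoint U $$ (l,i))"
      using U i by (subst mult_idx) auto
    also have "\<dots> = (\<Sum>l<n. (U $$ (i,l) * of_real (g l)) * cnj (U $$ (i,l)))"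
    proof (intro sum.cong refl)
      fix l assume l: "l \<in> {..<n}"
      have "(U * real_diag_mat n g) $$ (i,l) = (\<Sum>k<n. U $$ (i,k) * real_diag_mat n g $$ (k,l))"
        using U i l by (subst mult_idx) auto
      also have "\<dots> = (\<Sum>k<n. if k = l then U $$ (i,k) * of_real (g l) else 0)"
        using l by (intro sum.cong refl) (auto simp: real_diag_mat_def)
      also have "\<dots> = U $$ (i,l) * of_real (g l)" using l by simp
      finally show "(U * real_diag_mat n g) $$ (i,l) * mat_adjoint U $$ (l,i) = (U $$ (i,l) * of_real (g l)) * cnj (U $$ (i,l))"
        using U i l by simp
    qed
    finally show ?thesis by (simp add: mult_ac)
  qed
  have "mat_trace (U * real_diag_mat n g * mat_adjoint U) = (\<Sum>i<n. \<Sum>k<n. of_real (g k) * (cnj (U $$ (i,k)) * U $$ (i,k)))"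
    unfolding mat_trace_def using U by (intro sum.cong) (simp, rule ent, simp)
  also have "\<dots> = (\<Sum>k<n. of_real (g k) * (\<Sum>i<n. cnj (U $$ (i,k)) * U $$ (i,k)))"
    by (subst sum.swap) (simp add: sum_distrib_left)
  also have "\<dots> = (\<Sum>k<n. of_real (g k))"
  proof (intro sum.cong refl)
    fix k assume k: "k \<in> {..<n}"
    have "(\<Sum>i<n. cnj (U $$ (i,k)) * U $$ (i,k)) = (mat_adjoint U * U) $$ (k,k)"
      using U k by (subst mult_idx) auto
    also have "\<dots> = 1" using UU k by simp
    finally show "of_real (g k) * (\<Sum>i<n. cnj (U $$ (i,k)) * U $$ (i,k)) = of_real (g k)" by simp
  qed
  finally show ?thesis by simp
qed

lemma trlog:
  fixes A :: "complex mat"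
  assumes A: "A \<in> carrier_mat n n"
    and ex: "\<exists>U d. U \<in> carrier_mat n n \<and> mat_adjoint U * U = 1\<^sub>m n \<and> (\<forall>i<n. d i > 0) \<and>
              A = U * real_diag_mat n d * mat_adjoint U"
  shows "tr_N (matrix_log A) = of_real (ln (Re (Determinant.det A))) / of_nat n"
proof -
  have dr: "dim_row A = n" using A by simp
  define P where "P L = (\<exists>U d. U \<in> carrier_mat n n \<and> mat_adjoint U * U = 1\<^sub>m n \<and> (\<forall>i<n. d i > 0) \<and>
      A = U * real_diag_mat n d * mat_adjoint U \<and> L = U * real_diag_mat n (\<lambda>i. ln (d i)) * mat_adjoint U)" for L
  have ml: "matrix_log A = (SOME L. P L)" unfolding matrix_log_def dr P_def ..
  have "\<exists>L. P L" using ex unfolding P_def by blast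
  then have "P (matrix_log A)" unfolding ml by (rule someI_ex)
  then obtain U d where U: "U \<in> carrier_mat n n" and UU: "mat_adjoint U * U = 1\<^sub>m n"
    and d: "\<forall>i<n. d i > 0" and Aeq: "A = U * real_diag_mat n d * mat_adjoint U"
    and L: "matrix_log A = U * real_diag_mat n (\<lambda>i. ln (d i)) * mat_adjoint U" unfolding P_def by blast
  have Lc: "matrix_log A \<in> carrier_mat n n" unfolding L using U by auto
  have tr: "mat_trace (matrix_log A) = of_real (\<Sum>i<n. ln (d i))" unfolding L by (rule trace_conj[OF U UU])
  have "Determinant.det A = Determinant.det U * Determinant.det (real_diag_mat n d) * Determinant.det (mat_adjoint U)"
    unfolding Aeq using U by (simp add: det_mult[of _ n])
  also have "Determinant.det (mat_adjoint U) * Determinant.det U = 1"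
    using det_mult[OF adj_carrier[OF U] U] UU by simp
  then have "Determinant.det U * Determinant.det (real_diag_mat n d) * Determinant.det (mat_adjoint U) = Determinant.det (real_diag_mat n d)"
    by (simp add: algebra_simps)
  finally have "Determinant.det A = of_real (\<Prod>i<n. d i)" by (simp only: det_rdm)
  then have "ln (Re (Determinant.det A)) = (\<Sum>i<n. ln (d i))" using d by (simp only: Re_complex_of_real) (subst ln_prod, auto)
  then show ?thesis unfolding tr_N_def tr using Lc by simp
qed

lemma normsq: "z * cnj z = (complex_of_real (cmod z))\<^sup>2"
  by (metis complex_norm_square of_real_power)

lemma gram_decomp:
  fixes V :: "complex mat"
  assumes V: "V \<in> carrier_mat n n" and dV: "Determinant.det V \<noteq> 0"
  shows "\<exists>U d. U \<in> carrier_mat n n \<and> mat_adjoint U * U = 1\<^sub>m n \<and> (\<forall>i<n. d i > 0) \<and>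
              mat_adjoint V * V = U * real_diag_mat n d * mat_adjoint U"
proof -
  define A where "A = mat_adjoint V * V"
  have A: "A \<in> carrier_mat n n" unfolding A_def using V by auto
  obtain U T where U: "U \<in> carrier_mat n n" and T: "T \<in> carrier_mat n n" and UU: "mat_adjoint U * U = 1\<^sub>m n"
    and UU': "U * mat_adjoint U = 1\<^sub>m n" and ut: "upper_triangular T" and AT: "A = U * T * mat_adjoint U"
    using unitary_schur[OF A] by blast
  define sq where "sq X = (X \<in> carrier_mat n n)" for X :: "complex mat"
  have sqm: "sq X \<Longrightarrow> sq Y \<Longrightarrow> sq (X * Y)" for X Y unfolding sq_def by simp
  have asc: "sq X \<Longrightarrow> sq Y \<Longrightarrow> sq Z \<Longrightarrow> X * Y * Z = X * (Y * Z)" for X Y Z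
    unfolding sq_def by (rule assoc_mult_mat)
  have sqs: "sq U" "sq (mat_adjoint U)" "sq T" "sq V" "sq (mat_adjoint V)" unfolding sq_def using U T V by auto
  define W where "W = V * U"
  have Wc: "W \<in> carrier_mat n n" unfolding W_def using V U by auto
  have TW: "T = mat_adjoint W * W"
  proof -
    have "mat_adjoint U * A * U = (mat_adjoint U * U) * T * (mat_adjoint U * U)"
      unfolding AT by (simp only: asc sqm sqs)
    also have "\<dots> = T" using T by (simp add: UU)
    finally have "T = mat_adjoint U * A * U" ..
    also have "\<dots> = mat_adjoint W * W" unfolding A_def W_def adj_mult[OF V U]
      by (simp only: asc sqm sqs)
    finally show ?thesis .
  qed
  have Tent: "T $$ (i,j) = (\<Sum>k<n. cnj (W $$ (k,i)) * W $$ (k,j))" if "i < n" "j < n" for i j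
    unfolding TW using that Wc by (subst mult_idx) auto
  define d where "d i = (\<Sum>k<n. (cmod (W $$ (k,i)))\<^sup>2)" for i
  have Tdiag: "T $$ (i,i) = of_real (d i)" if "i < n" for i
    unfolding Tent[OF that that] d_def of_real_sum
    by (intro sum.cong refl) (simp add: normsq mult.commute)
  have Toff: "T $$ (i,j) = 0" if "i < n" "j < n" "i \<noteq> j" for i j
  proof (cases "j < i")
    case True
    then show ?thesis using ut that T by (intro upper_triangularD) auto
  next
    case False
    then have "i < j" using that by auto
    then have "T $$ (j,i) = 0" using ut that T by (intro upper_triangularD) auto
    moreover have "T $$ (i,j) = cnj (T $$ (j,i))" using that by (simp add: Tent mult.commute)
    ultimately show ?thesis by simp
  qed
  have Td: "T = real_diag_mat n d"
  proof (rule eq_matI)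
    fix i j assume ij: "i < dim_row (real_diag_mat n d)" "j < dim_col (real_diag_mat n d)"
    then have i: "i < n" and j: "j < n" by auto
    show "T $$ (i, j) = real_diag_mat n d $$ (i, j)"
    proof (cases "i = j")
      case True
      then show ?thesis using Tdiag[OF i] i by (simp add: real_diag_mat_def)
    next
      case False
      then show ?thesis using Toff[OF i j False] i j by (simp add: real_diag_mat_def)
    qed
  qed (use T in auto)
  have dU: "Determinant.det U \<noteq> 0"
    using det_mult[OF adj_carrier[OF U] U] UU by auto
  have "Determinant.det T = cnj (Determinant.det W) * Determinant.det W"
    unfolding TW using Wc by (simp add: det_mult[of _ n] det_adj)
  moreover have "Determinant.det W \<noteq> 0" unfolding W_def using V U dV dU by (simp add: det_mult[of _ n])
  ultimately have "Determinant.det T \<noteq> 0" by simp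
  then have dne: "(\<Prod>i<n. d i) \<noteq> 0" unfolding Td det_rdm by simp
  have dpos: "\<forall>i<n. d i > 0"
  proof (intro allI impI)
    fix i assume i: "i < n"
    have "d i \<ge> 0" unfolding d_def by (intro sum_nonneg) auto
    moreover have "d i \<noteq> 0" using dne i by auto
    ultimately show "d i > 0" by simp
  qed
  have "mat_adjoint V * V = U * real_diag_mat n d * mat_adjoint U" using AT Td unfolding A_def by simp
  then show ?thesis using U UU dpos by blast
qed

lemma trlog_gram:
  fixes V :: "complex mat"
  assumes V: "V \<in> carrier_mat n n" and dV: "Determinant.det V \<noteq> 0"
  shows "tr_N (matrix_log (mat_adjoint V * V)) = of_real (2 * ln (cmod (Determinant.det V))) / of_nat n"
proof -
  have A: "mat_adjoint V * V \<in> carrier_mat n n" using V by auto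
  have "tr_N (matrix_log (mat_adjoint V * V)) = of_real (ln (Re (Determinant.det (mat_adjoint V * V)))) / of_nat n"
    by (rule trlog[OF A gram_decomp[OF V dV]])
  also have "Determinant.det (mat_adjoint V * V) = of_real ((cmod (Determinant.det V))\<^sup>2)"
    using V by (simp add: det_mult[of _ n] det_adj normsq mult.commute)
  also have "ln (Re (complex_of_real ((cmod (Determinant.det V))\<^sup>2))) = 2 * ln (cmod (Determinant.det V))"
    using dV by (simp add: ln_realpow)
  finally show ?thesis .
qed

lemma mult_idx': "i < dim_row A \<Longrightarrow> j < dim_col B \<Longrightarrow> dim_col A = dim_row B \<Longrightarrow>
  (A * B) $$ (i,j) = (\<Sum>k<dim_col A. A $$ (i,k) * B $$ (k,j))"
  by (simp add: index_mult_mat scalar_prod_def atLeast0LessThan)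

lemma prod_list_upt': "prod_list (map f [0..<n]) = (\<Prod>i<n. f i)"
  by (induct n) auto

lemma det_col_scale:
  fixes c :: "nat \<Rightarrow> complex"
  shows "Determinant.det (mat n n (\<lambda>(j,q). f j q * c q)) = (\<Prod>q<n. c q) * Determinant.det (mat n n (\<lambda>(j,q). f j q))"
proof -
  define D where "D = mat n n (\<lambda>(i,j). if i = j then c i else 0)"
  have "mat n n (\<lambda>(j,q). f j q * c q) = mat n n (\<lambda>(j,q). f j q) * D"
  proof (rule eq_matI)
    fix i j assume "i < dim_row (mat n n (\<lambda>(j,q). f j q) * D)" "j < dim_col (mat n n (\<lambda>(j,q). f j q) * D)"
    then have i: "i < n" and j: "j < n" by (auto simp: D_def)
    have "(mat n n (\<lambda>(j,q). f j q) * D) $$ (i,j) = (\<Sum>k<n. f i k * (if k = j then c k else 0))"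
      using i j by (subst mult_idx') (auto simp: D_def)
    also have "\<dots> = f i j * c j" using j by (simp add: if_distrib cong: if_cong)
    finally show "mat n n (\<lambda>(j,q). f j q * c q) $$ (i,j) = (mat n n (\<lambda>(j,q). f j q) * D) $$ (i,j)"
      using i j by simp
  qed (auto simp: D_def)
  moreover have "Determinant.det D = (\<Prod>q<n. c q)"
  proof -
    have "Determinant.det D = prod_list (diag_mat D)"
      by (rule det_upper_triangular) (auto simp: D_def upper_triangular_def)
    also have "\<dots> = (\<Prod>q<n. c q)"
    proof -
      have "diag_mat D = map c [0..<n]" by (auto simp: diag_mat_def D_def)
      moreover have "prod_list (map c [0..<n]) = (\<Prod>q<n. c q)" by (induct n) auto
      ultimately show ?thesis by simp
    qed
    finally show ?thesis .
  qed
  ultimately show ?thesis by (simp add: det_mult[of _ n] D_def mult.commute)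
qed

lemma vandermonde_det:
  fixes x :: "nat \<Rightarrow> complex"
  shows "Determinant.det (mat n n (\<lambda>(j,q). x q ^ j)) = (\<Prod>q<n. \<Prod>p<q. (x q - x p))"
proof (induct n arbitrary: x)
  case 0
  then show ?case by (simp add: det_def)
next
  case (Suc n x)
  define M where "M = mat (Suc n) (Suc n) (\<lambda>(j,q). x q ^ j)"
  define L where "L = mat (Suc n) (Suc n) (\<lambda>(i,j). if i = j then 1 else if i = Suc j then - x 0 else (0::complex))"
  define C where "C = mat (Suc n) (Suc n) (\<lambda>(j,q). if j = 0 then 1 else x q ^ (j - 1) * (x q - x 0))"
  have Mc: "M \<in> carrier_mat (Suc n) (Suc n)" and Lc: "L \<in> carrier_mat (Suc n) (Suc n)"
    and Cc: "C \<in> carrier_mat (Suc n) (Suc n)" by (auto simp: M_def L_def C_def)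
  have detL: "Determinant.det L = 1"
  proof -
    have "Determinant.det L = prod_list (diag_mat L)"
      by (rule det_lower_triangular[OF _ Lc]) (auto simp: L_def)
    also have "\<dots> = (\<Prod>i<Suc n. L $$ (i,i))" unfolding diag_mat_def using Lc by (simp add: prod_list_upt')
    also have "\<dots> = 1" by (simp add: L_def)
    finally show ?thesis .
  qed
  have LM: "L * M = C"
  proof (rule eq_matI)
    fix i j assume "i < dim_row C" "j < dim_col C"
    then have i: "i < Suc n" and j: "j < Suc n" by (auto simp: C_def)
    have "(L * M) $$ (i,j) = (\<Sum>k<Suc n. L $$ (i,k) * M $$ (k,j))"
      using i j Lc Mc by (subst mult_idx') auto
    also have "\<dots> = (\<Sum>k<Suc n. (if i = k then 1 else if i = Suc k then - x 0 else 0) * x j ^ k)"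
      using i j by (intro sum.cong refl) (auto simp: L_def M_def)
    also have "\<dots> = C $$ (i,j)"
    proof (cases i)
      case 0
      have "(\<Sum>k<Suc n. (if i = k then 1 else if i = Suc k then - x 0 else 0) * x j ^ k) = (\<Sum>k<Suc n. if k = 0 then 1 else 0)"
        using 0 by (intro sum.cong refl) auto
      also have "\<dots> = 1" by simp
      finally show ?thesis using j 0 by (simp add: C_def)
    next
      case (Suc i')
      have "(\<Sum>k<Suc n. (if i = k then 1 else if i = Suc k then - x 0 else 0) * x j ^ k)
          = (\<Sum>k<Suc n. (if k = i then x j ^ k else 0)) + (\<Sum>k<Suc n. (if k = i' then - x 0 * x j ^ k else 0))"
        unfolding sum.distrib[symmetric] using Suc by (intro sum.cong refl) auto
      also have "\<dots> = x j ^ i - x 0 * x j ^ i'" using i Suc by simp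
      also have "\<dots> = C $$ (i,j)" using i j Suc by (simp add: C_def algebra_simps)
      finally show ?thesis .
    qed
    finally show "(L * M) $$ (i,j) = C $$ (i,j)" .
  qed (auto simp: L_def C_def M_def)
  have detM: "Determinant.det M = Determinant.det C"
    using det_mult[OF Lc Mc] detL LM by simp
  have "Determinant.det C = (\<Sum>i<Suc n. C $$ (i, 0) * cofactor C i 0)"
    by (rule laplace_expansion_column[OF Cc]) simp
  also have "\<dots> = (\<Sum>i<Suc n. if i = 0 then cofactor C 0 0 else 0)"
    by (intro sum.cong refl) (auto simp: C_def)
  also have "\<dots> = Determinant.det (mat_delete C 0 0)" by (simp add: cofactor_def)
  also have "mat_delete C 0 0 = mat n n (\<lambda>(j,q). x (Suc q) ^ j * (x (Suc q) - x 0))"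
    by (rule eq_matI) (auto simp: mat_delete_def C_def)
  also have "Determinant.det \<dots> = (\<Prod>q<n. (x (Suc q) - x 0)) * Determinant.det (mat n n (\<lambda>(j,q). x (Suc q) ^ j))"
    by (rule det_col_scale)
  also have "Determinant.det (mat n n (\<lambda>(j,q). x (Suc q) ^ j)) = (\<Prod>q<n. \<Prod>p<q. (x (Suc q) - x (Suc p)))"
    using Suc(1)[of "\<lambda>q. x (Suc q)"] by simp
  also have "(\<Prod>q<n. (x (Suc q) - x 0)) * (\<Prod>q<n. \<Prod>p<q. (x (Suc q) - x (Suc p))) = (\<Prod>q<Suc n. \<Prod>p<q. (x q - x p))"
    by (simp only: prod.lessThan_Suc_shift prod.distrib) simp
  finally show ?case unfolding M_def[symmetric] detM .
qed

lemma sin_half: assumes "0 \<le> x" "x \<le> pi/2" shows "x / 2 \<le> sin x"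
proof -
  have b: "\<bar>sin x - (\<Sum>m<3. sin_coeff m * x ^ m)\<bar> \<le> inverse (fact 3) * \<bar>x\<bar> ^ 3"
    by (rule Maclaurin_sin_bound)
  have "(\<Sum>m<3. sin_coeff m * x ^ m) = x"
    by (simp add: sin_coeff_def eval_nat_numeral)
  with b have "\<bar>sin x - x\<bar> \<le> inverse 6 * x ^ 3" using assms by (simp add: eval_nat_numeral)
  moreover have "x ^ 3 / 6 = inverse 6 * x ^ 3" by simp
  ultimately have s: "x - x ^ 3 / 6 \<le> sin x" unfolding abs_le_iff by linarith
  have "pi \<le> 3.2" using pi_approx by simp
  then have "x \<le> 1.6" using assms by linarith
  then have "x * x \<le> 1.6 * 1.6" using assms by (intro mult_mono) auto
  then have "x * (x * x) \<le> x * 3" using assms by (intro mult_left_mono) auto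
  then have "x ^ 3 / 6 \<le> x / 2" by (simp add: power3_eq_cube)
  with s show ?thesis by linarith
qed

lemma cmod_ediff:
  "cmod (exp (2 * of_real pi * \<i> * of_real t1) - exp (2 * of_real pi * \<i> * of_real t2)) = 2 * \<bar>sin (pi * (t1 - t2))\<bar>"
proof -
  define a where "a = 2 * pi * t1"
  define b where "b = 2 * pi * t2"
  define y where "y = pi * (t1 - t2)"
  have ab: "a - b = 2 * y" unfolding a_def b_def y_def by (simp add: algebra_simps)
  have e: "exp (2 * of_real pi * \<i> * of_real t) = Complex (cos (2 * pi * t)) (sin (2 * pi * t))" for t
  proof -
    have "2 * of_real pi * \<i> * of_real t = \<i> * complex_of_real (2 * pi * t)" by simp
    then show ?thesis by (simp only: cis_conv_exp[symmetric] cis.ctr)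
  qed
  have "(cmod (exp (2 * of_real pi * \<i> * of_real t1) - exp (2 * of_real pi * \<i> * of_real t2)))\<^sup>2
      = (cos a - cos b)\<^sup>2 + (sin a - sin b)\<^sup>2"
    unfolding e a_def b_def by (simp add: cmod_def)
  also have "\<dots> = 2 - 2 * cos (a - b)"
  proof -
    have h1: "(sin a)\<^sup>2 + (cos a)\<^sup>2 = 1" "(sin b)\<^sup>2 + (cos b)\<^sup>2 = 1" by simp_all
    have h2: "2 * (cos a * cos b + sin a * sin b) = 2 * cos a * cos b + 2 * sin a * sin b" by (simp add: algebra_simps)
    show ?thesis unfolding cos_diff power2_diff h2 using h1 by linarith
  qed
  also have "\<dots> = (2 * \<bar>sin y\<bar>)\<^sup>2"
    unfolding ab by (simp add: cos_double_sin power2_eq_square)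
  finally have "(cmod (exp (2 * of_real pi * \<i> * of_real t1) - exp (2 * of_real pi * \<i> * of_real t2)))\<^sup>2 = (2 * \<bar>sin y\<bar>)\<^sup>2" .
  then show ?thesis unfolding y_def by (rule power2_eq_imp_eq) auto
qed

lemma abs_sin_ge:
  assumes "-1 \<le> u" "u \<le> 1"
  shows "min \<bar>u\<bar> (min \<bar>u - 1\<bar> \<bar>u + 1\<bar>) \<le> \<bar>sin (pi * u)\<bar>"
proof -
  have pc: "c \<le> pi * c / 2" if "0 \<le> c" for c
    using mult_right_mono[OF pi_ge_two that] by linarith
  have key: "min a (1 - a) \<le> sin (pi * a)" if "0 \<le> a" "a \<le> 1" for a
  proof (cases "a \<le> 1/2")
    case True
    have "pi * a / 2 \<le> sin (pi * a)" using True that by (intro sin_half) auto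
    moreover have "a \<le> pi * a / 2" using pc that by auto
    ultimately show ?thesis by linarith
  next
    case False
    have "pi * (1 - a) / 2 \<le> sin (pi * (1 - a))" using False that by (intro sin_half) auto
    moreover have "sin (pi * (1 - a)) = sin (pi * a)" by (simp add: algebra_simps sin_diff)
    moreover have "1 - a \<le> pi * (1 - a) / 2" using pc[of "1 - a"] that by auto
    ultimately show ?thesis by linarith
  qed
  show ?thesis
  proof (cases "u \<ge> 0")
    case True
    then have "min u (1 - u) \<le> sin (pi * u)" using key assms by auto
    moreover have "sin (pi * u) \<ge> 0" using True assms by (intro sin_ge_zero) auto
    ultimately show ?thesis using True assms by auto
  next
    case False
    then have "min (-u) (1 + u) \<le> sin (pi * (-u))" using key[of "-u"] assms by auto
    then show ?thesis using False assms by auto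
  qed
qed
lemma phi_bound:
  assumes s: "0 \<le> s" "s \<le> 1" and t: "0 \<le> t" "t \<le> 1"
  shows "max 0 (- ln (cmod (exp (2 * of_real pi * \<i> * of_real s) - exp (2 * of_real pi * \<i> * of_real t))))
    \<le> 2 * (\<bar>s - t\<bar> powr (-(1/2)) + \<bar>s - t - 1\<bar> powr (-(1/2)) + \<bar>s - t + 1\<bar> powr (-(1/2)))"
    (is "?L \<le> ?R")
proof -
  define u where "u = s - t"
  define r where "r = cmod (exp (2 * of_real pi * \<i> * of_real s) - exp (2 * of_real pi * \<i> * of_real t))"
  define d where "d = min \<bar>u\<bar> (min \<bar>u - 1\<bar> \<bar>u + 1\<bar>)"
  have u: "-1 \<le> u" "u \<le> 1" unfolding u_def using s t by auto
  have r: "r = 2 * \<bar>sin (pi * u)\<bar>" unfolding r_def u_def by (rule cmod_ediff)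
  have dr: "d \<le> r" using abs_sin_ge[OF u] r unfolding d_def by linarith
  have R0: "0 \<le> ?R" by simp
  show ?thesis
  proof (cases "r = 0")
    case True
    then show ?thesis using R0 unfolding r_def[symmetric] by simp
  next
    case False
    then have rpos: "r > 0" unfolding r_def by simp
    have dpos: "d > 0"
    proof (rule ccontr)
      assume "\<not> d > 0"
      then have "d = 0" using dr unfolding d_def by auto
      then have "u = 0 \<or> u = 1 \<or> u = -1" unfolding d_def by (auto simp: min_def split: if_splits)
      then have "sin (pi * u) = 0" by auto
      then show False using rpos r by simp
    qed
    define q where "q = inverse (sqrt d)"
    have qpos: "q > 0" unfolding q_def using dpos by simp
    have lnq: "ln q = - ln d / 2" unfolding q_def using dpos by (simp add: ln_inverse ln_sqrt)
    have "- ln r \<le> - ln d" using dpos dr by simp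
    also have "\<dots> = 2 * ln q" using lnq by simp
    also have "\<dots> < 2 * q" using ln_less_self[OF qpos] by simp
    finally have lr: "- ln r < 2 * q" .
    have qd: "q = d powr (-(1/2))" unfolding q_def using dpos
      by (simp add: powr_minus powr_half_sqrt)
    have "q \<le> \<bar>s - t\<bar> powr (-(1/2)) + \<bar>s - t - 1\<bar> powr (-(1/2)) + \<bar>s - t + 1\<bar> powr (-(1/2))"
      unfolding qd d_def u_def by (auto simp: min_def)
    then have "2 * q \<le> ?R" by simp
    then show ?thesis using lr qpos unfolding r_def[symmetric] by simp
  qed
qed

lemma J0_fin: "(\<integral>\<^sup>+ y. ennreal (indicator {0..2} y * y powr (-(1/2))) \<partial>lborel) < \<infinity>"
proof -
  have "(\<lambda>x. x powr (-(1/2))) integrable_on {0..2::real}" by (rule integrable_on_powr_from_0) auto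
  then have hi: "((\<lambda>x. x powr (-(1/2))) has_integral integral {0..2::real} (\<lambda>x. x powr (-(1/2)))) {0..2}"
    by (rule integrable_integral)
  have "(\<integral>\<^sup>+ y. ennreal (indicator {0..2} y * y powr (-(1/2))) \<partial>lborel) = ennreal (integral {0..2::real} (\<lambda>x. x powr (-(1/2))))"
    by (rule nn_integral_has_integral_lebesgue[OF _ hi]) auto
  then show ?thesis by simp
qed

lemma J_fin: "(\<integral>\<^sup>+ y. ennreal (indicator {-2..2} y * \<bar>y\<bar> powr (-(1/2))) \<partial>lborel) < \<infinity>"
proof -
  define g where "g y = ennreal (indicator {0..2} y * y powr (-(1/2)))" for y :: real
  have gm: "g \<in> borel_measurable borel" unfolding g_def by measurable
  have le: "ennreal (indicator {-2..2} y * \<bar>y\<bar> powr (-(1/2))) \<le> g y + g (0 + (-1) * y)" for y :: real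
    unfolding g_def by (cases "y \<ge> 0") (auto simp: indicator_def)
  have "(\<integral>\<^sup>+ y. ennreal (indicator {-2..2} y * \<bar>y\<bar> powr (-(1/2))) \<partial>lborel) \<le> (\<integral>\<^sup>+ y. g y + g (0 + (-1) * y) \<partial>lborel)"
    by (intro nn_integral_mono le)
  also have "\<dots> = (\<integral>\<^sup>+ y. g y \<partial>lborel) + (\<integral>\<^sup>+ y. g (0 + (-1) * y) \<partial>lborel)"
    by (rule nn_integral_add) (use gm in auto)
  also have "(\<integral>\<^sup>+ y. g (0 + (-1) * y) \<partial>lborel) = (\<integral>\<^sup>+ y. g y \<partial>lborel)"
    using nn_integral_real_affine[OF gm, of "-1" 0] by simp
  finally show ?thesis using J0_fin unfolding g_def[symmetric]
    by (metis (no_types) ennreal_add_eq_top infinity_ennreal_def neq_top_trans top.not_eq_extremum)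
qed

lemma inner_bound:
  assumes s: "0 \<le> s" "s \<le> 1" and c: "\<bar>c\<bar> \<le> 1"
  shows "(\<integral>\<^sup>+ t. ennreal (indicator {0..1} t * \<bar>s + c - t\<bar> powr (-(1/2))) \<partial>lborel)
    \<le> (\<integral>\<^sup>+ y. ennreal (indicator {-2..2} y * \<bar>y\<bar> powr (-(1/2))) \<partial>lborel)"
proof -
  define g where "g y = ennreal (indicator {-2..2} y * \<bar>y\<bar> powr (-(1/2)))" for y :: real
  have gm: "g \<in> borel_measurable borel" unfolding g_def by measurable
  have "(\<integral>\<^sup>+ t. ennreal (indicator {0..1} t * \<bar>s + c - t\<bar> powr (-(1/2))) \<partial>lborel) \<le> (\<integral>\<^sup>+ t. g ((s + c) + (-1) * t) \<partial>lborel)"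
    using s c unfolding g_def by (intro nn_integral_mono) (auto simp: indicator_def)
  also have "\<dots> = (\<integral>\<^sup>+ y. g y \<partial>lborel)"
    using nn_integral_real_affine[OF gm, of "-1" "s + c"] by simp
  finally show ?thesis unfolding g_def .
qed

locale nuset =
  fixes f :: "real \<Rightarrow> real" and \<nu> :: "real measure"
  assumes f_cont: "continuous_on {0..1} f"
    and f_nonneg: "\<And>x. x \<in> {0..1} \<Longrightarrow> f x \<ge> 0"
    and f_int: "integral {0..1} f = 1"
    and nu_def: "\<nu> = density lborel (\<lambda>x. ennreal (f x * indicator {0..1} x))"
begin

lemma dens_meas: "(\<lambda>x. f x * indicator {0..1} x) \<in> borel_measurable borel"
proof -
  have "(\<lambda>x. indicator {0..1} x *\<^sub>R f x) \<in> borel_measurable borel"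
    by (rule borel_measurable_continuous_on_indicator[OF _ f_cont]) auto
  then show ?thesis by (simp add: mult.commute)
qed

lemma dens_meas': "(\<lambda>x. ennreal (f x * indicator {0..1} x)) \<in> borel_measurable borel"
  using dens_meas by measurable

lemma sets_nu[measurable_cong]: "sets \<nu> = sets borel"
  unfolding nu_def by simp

lemma space_nu[simp]: "space \<nu> = UNIV"
  unfolding nu_def by simp

lemma nu_prob: "prob_space \<nu>"
proof
  have hi: "(f has_integral 1) {0..1}"
    using integrable_continuous_interval[OF f_cont] f_int by (metis integrable_integral)
  have "emeasure \<nu> (space \<nu>) = (\<integral>\<^sup>+ x. ennreal (f x * indicator {0..1} x) \<partial>lborel)"
    unfolding nu_def using dens_meas' by (simp add: emeasure_density)
  also have "\<dots> = (\<integral>\<^sup>+ x. ennreal (indicator {0..1} x * f x) \<partial>lborel)" by (simp add: mult.commute)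
  also have "\<dots> = ennreal 1" by (rule nn_integral_has_integral_lebesgue[OF _ hi]) (use f_nonneg in auto)
  finally show "emeasure \<nu> (space \<nu>) = 1" by simp
qed

lemma f_bound: "\<exists>B>0. \<forall>x\<in>{0..1}. f x \<le> B"
proof -
  obtain x where "x \<in> {0..1::real}" "\<forall>y\<in>{0..1}. f y \<le> f x"
    using continuous_attains_sup[OF compact_Icc _ f_cont] by auto
  then show ?thesis by (intro exI[of _ "max 1 (f x)"]) auto
qed

lemma AE_nu_01: "AE x in \<nu>. x \<in> {0..1}"
  unfolding nu_def using dens_meas' by (subst AE_density) (auto simp: indicator_def)

lemma nn_nu_le:
  assumes g: "g \<in> borel_measurable borel" and B: "\<forall>x\<in>{0..1}. f x \<le> B" "B > 0"
  shows "(\<integral>\<^sup>+ x. g x \<partial>\<nu>) \<le> ennreal B * (\<integral>\<^sup>+ x. indicator {0..1} x * g x \<partial>lborel)"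
proof -
  have "(\<integral>\<^sup>+ x. g x \<partial>\<nu>) = (\<integral>\<^sup>+ x. ennreal (f x * indicator {0..1} x) * g x \<partial>lborel)"
    unfolding nu_def by (rule nn_integral_density) (use dens_meas' g in auto)
  also have "\<dots> \<le> (\<integral>\<^sup>+ x. ennreal B * (indicator {0..1} x * g x) \<partial>lborel)"
  proof (intro nn_integral_mono)
    fix x
    show "ennreal (f x * indicator {0..1} x) * g x \<le> ennreal B * (indicator {0..1} x * g x)"
      using B by (cases "x \<in> {0..1}") (auto intro!: mult_right_mono ennreal_leI)
  qed
  also have "\<dots> = ennreal B * (\<integral>\<^sup>+ x. indicator {0..1} x * g x \<partial>lborel)"
    by (rule nn_integral_cmult) (use g in measurable)
  finally show ?thesis .
qed

abbreviation "HH \<equiv> (\<lambda>(t1::real, t2::real). ln (cmod (exp (2 * of_real pi * \<i> * of_real t1) - exp (2 * of_real pi * \<i> * of_real t2))))"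

lemma HH_meas: "HH \<in> borel_measurable (\<nu> \<Otimes>\<^sub>M \<nu>)"
  by measurable

lemma Phi_fin: "(\<integral>\<^sup>+ z. ennreal (max 0 (- HH z)) \<partial>(\<nu> \<Otimes>\<^sub>M \<nu>)) < \<infinity>"
proof -
  obtain B where B: "B > 0" "\<forall>x\<in>{0..1}. f x \<le> B" using f_bound by auto
  define J where "J = (\<integral>\<^sup>+ y. ennreal (indicator {-2..2} y * \<bar>y\<bar> powr (-(1/2))) \<partial>lborel)"
  have Jf: "J < \<infinity>" unfolding J_def by (rule J_fin)
  interpret nu: prob_space \<nu> by (rule nu_prob)
  have inner: "(\<integral>\<^sup>+ t. ennreal (max 0 (- HH (s, t))) \<partial>\<nu>) \<le> ennreal B * (2 * (J + J + J))"
    if s: "0 \<le> s" "s \<le> 1" for s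
  proof -
    define E where "E c t = ennreal (indicator {0..1} t * \<bar>s + c - t\<bar> powr (-(1/2)))" for c t :: real
    have Em: "E c \<in> borel_measurable borel" for c unfolding E_def by measurable
    have "(\<integral>\<^sup>+ t. ennreal (max 0 (- HH (s, t))) \<partial>\<nu>) \<le> ennreal B * (\<integral>\<^sup>+ t. indicator {0..1} t * ennreal (max 0 (- HH (s, t))) \<partial>lborel)"
      by (rule nn_nu_le[OF _ B(2) B(1)]) (unfold prod.case, measurable)
    also have "(\<integral>\<^sup>+ t. indicator {0..1} t * ennreal (max 0 (- HH (s, t))) \<partial>lborel) \<le> (\<integral>\<^sup>+ t. 2 * (E 0 t + E (-1) t + E 1 t) \<partial>lborel)"
    proof (intro nn_integral_mono)
      fix t
      show "indicator {0..1} t * ennreal (max 0 (- HH (s, t))) \<le> 2 * (E 0 t + E (-1) t + E 1 t)"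
      proof (cases "t \<in> {0..1}")
        case True
        have pb: "max 0 (- HH (s, t)) \<le> 2 * (\<bar>s - t\<bar> powr (-(1/2)) + \<bar>s - t - 1\<bar> powr (-(1/2)) + \<bar>s - t + 1\<bar> powr (-(1/2)))"
          using phi_bound[of s t] s True by simp
        have e1: "E 0 t = ennreal (\<bar>s - t\<bar> powr (-(1/2)))" "E (-1) t = ennreal (\<bar>s - t - 1\<bar> powr (-(1/2)))"
          "E 1 t = ennreal (\<bar>s - t + 1\<bar> powr (-(1/2)))" unfolding E_def using True by (simp_all add: algebra_simps)
        have eq: "2 * (E 0 t + E (-1) t + E 1 t) = ennreal (2 * (\<bar>s - t\<bar> powr (-(1/2)) + \<bar>s - t - 1\<bar> powr (-(1/2)) + \<bar>s - t + 1\<bar> powr (-(1/2))))"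
          unfolding e1 by (simp only: ennreal_plus[symmetric] powr_ge_zero add_nonneg_nonneg ennreal_mult'[symmetric] ennreal_numeral[symmetric])
        have "indicator {0..1} t * ennreal (max 0 (- HH (s, t))) = ennreal (max 0 (- HH (s, t)))" using True by simp
        also have "\<dots> \<le> 2 * (E 0 t + E (-1) t + E 1 t)" unfolding eq by (rule ennreal_leI[OF pb])
        finally show ?thesis .
      qed simp
    qed
    also have "\<dots> = 2 * ((\<integral>\<^sup>+ t. E 0 t \<partial>lborel) + (\<integral>\<^sup>+ t. E (-1) t \<partial>lborel) + (\<integral>\<^sup>+ t. E 1 t \<partial>lborel))"
      using Em by (simp add: nn_integral_cmult nn_integral_add)
    also have "\<dots> \<le> 2 * (J + J + J)"
      using inner_bound[OF s, of 0] inner_bound[OF s, of "-1"] inner_bound[OF s, of 1]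
      unfolding E_def J_def by (intro mult_left_mono add_mono) auto
    finally show ?thesis by (simp add: mult_left_mono)
  qed
  have "(\<integral>\<^sup>+ z. ennreal (max 0 (- HH z)) \<partial>(\<nu> \<Otimes>\<^sub>M \<nu>)) = (\<integral>\<^sup>+ s. (\<integral>\<^sup>+ t. ennreal (max 0 (- HH (s, t))) \<partial>\<nu>) \<partial>\<nu>)"
    by (rule sigma_finite_measure.nn_integral_fst[symmetric, OF prob_space_imp_sigma_finite[OF nu_prob]]) measurable
  also have "\<dots> \<le> (\<integral>\<^sup>+ s. ennreal B * (2 * (J + J + J)) \<partial>\<nu>)"
    by (intro nn_integral_mono_AE, use AE_nu_01 in eventually_elim) (rule inner, auto)
  also have "\<dots> = ennreal B * (2 * (J + J + J))" using nu.emeasure_space_1 by simp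
  also have "\<dots> < \<infinity>" using Jf by (simp add: ennreal_mult_less_top)
  finally show ?thesis .
qed

lemma HH_le: "HH z \<le> ln 2"
proof -
  obtain t1 t2 where z: "z = (t1, t2)" by (cases z)
  define r where "r = cmod (exp (2 * of_real pi * \<i> * of_real t1) - exp (2 * of_real pi * \<i> * of_real t2))"
  have "r = 2 * \<bar>sin (pi * (t1 - t2))\<bar>" unfolding r_def by (rule cmod_ediff)
  then have r2: "r \<le> 2" by simp
  have "ln r \<le> ln 2"
  proof (cases "r > 0")
    case True
    then show ?thesis using r2 by simp
  next
    case False
    then have "r = 0" unfolding r_def by simp
    then show ?thesis by simp
  qed
  then show ?thesis unfolding z r_def by simp
qed

lemma HH_int: "integrable (\<nu> \<Otimes>\<^sub>M \<nu>) HH"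
proof (rule integrableI_bounded)
  show "HH \<in> borel_measurable (\<nu> \<Otimes>\<^sub>M \<nu>)" by (rule HH_meas)
  interpret nu: prob_space \<nu> by (rule nu_prob)
  interpret nn: prob_space "\<nu> \<Otimes>\<^sub>M \<nu>" by (intro prob_space_pair nu_prob)
  have "(\<integral>\<^sup>+ z. ennreal (norm (HH z)) \<partial>(\<nu> \<Otimes>\<^sub>M \<nu>)) \<le> (\<integral>\<^sup>+ z. ennreal (ln 2) + ennreal (max 0 (- HH z)) \<partial>(\<nu> \<Otimes>\<^sub>M \<nu>))"
  proof (intro nn_integral_mono)
    fix z
    have g: "\<And>x a::real. x \<le> a \<Longrightarrow> 0 \<le> a \<Longrightarrow> norm x \<le> a + max 0 (-x)" by auto
    have "norm (HH z) \<le> ln 2 + max 0 (- HH z)" by (rule g[OF HH_le]) simp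
    then have "ennreal (norm (HH z)) \<le> ennreal (ln 2 + max 0 (- HH z))" by (rule ennreal_leI)
    also have "\<dots> = ennreal (ln 2) + ennreal (max 0 (- HH z))" by (rule ennreal_plus) auto
    finally show "ennreal (norm (HH z)) \<le> ennreal (ln 2) + ennreal (max 0 (- HH z))" .
  qed
  also have "\<dots> = ennreal (ln 2) + (\<integral>\<^sup>+ z. ennreal (max 0 (- HH z)) \<partial>(\<nu> \<Otimes>\<^sub>M \<nu>))"
    using HH_meas nn.emeasure_space_1 by (subst nn_integral_add) auto
  also have "\<dots> < \<infinity>" using Phi_fin by simp
  finally show "(\<integral>\<^sup>+ z. ennreal (norm (HH z)) \<partial>(\<nu> \<Otimes>\<^sub>M \<nu>)) < \<infinity>" .
qed

end

lemma pps: assumes "prob_space M" shows "product_prob_space (\<lambda>_::nat. M)"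
proof -
  interpret M: prob_space M by fact
  have "product_sigma_finite (\<lambda>_::nat. M)"
    unfolding product_sigma_finite_def using M.sigma_finite_measure_axioms by simp
  then show ?thesis unfolding product_prob_space_def product_prob_space_axioms_def using assms by simp
qed

lemma pair_marg:
  fixes M :: "'a measure"
  assumes M: "prob_space M" and I: "finite I" "q \<in> I" "p \<in> I" "q \<noteq> p"
  shows "distr (PiM I (\<lambda>_. M)) (M \<Otimes>\<^sub>M M) (\<lambda>\<theta>. (\<theta> q, \<theta> p)) = M \<Otimes>\<^sub>M M"
proof -
  interpret M: prob_space M by fact
  interpret P: product_prob_space "\<lambda>_::'b. M"
    unfolding product_prob_space_def product_prob_space_axioms_def product_sigma_finite_def
    using M M.sigma_finite_measure_axioms by simp
  have meas: "(\<lambda>\<theta>. (\<theta> q, \<theta> p)) \<in> PiM I (\<lambda>_. M) \<rightarrow>\<^sub>M M \<Otimes>\<^sub>M M" using I by measurable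
  show ?thesis
  proof (rule pair_measure_eqI[symmetric])
    show "sigma_finite_measure M" by (rule M.sigma_finite_measure_axioms)
    show "sigma_finite_measure M" by (rule M.sigma_finite_measure_axioms)
    show "sets (M \<Otimes>\<^sub>M M) = sets (distr (PiM I (\<lambda>_. M)) (M \<Otimes>\<^sub>M M) (\<lambda>\<theta>. (\<theta> q, \<theta> p)))" by simp
    fix A B assume A: "A \<in> sets M" and B: "B \<in> sets M"
    define X where "X i = (if i = q then A else B)" for i
    have "emeasure (distr (PiM I (\<lambda>_. M)) (M \<Otimes>\<^sub>M M) (\<lambda>\<theta>. (\<theta> q, \<theta> p))) (A \<times> B)
        = emeasure (PiM I (\<lambda>_. M)) ((\<lambda>\<theta>. (\<theta> q, \<theta> p)) -` (A \<times> B) \<inter> space (PiM I (\<lambda>_. M)))"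
      using A B by (intro emeasure_distr[OF meas]) auto
    also have "(\<lambda>\<theta>. (\<theta> q, \<theta> p)) -` (A \<times> B) \<inter> space (PiM I (\<lambda>_. M)) = {x \<in> space (PiM I (\<lambda>_. M)). \<forall>i\<in>{q, p}. x i \<in> X i}"
      unfolding X_def using I by auto
    also have "emeasure (PiM I (\<lambda>_. M)) \<dots> = (\<Prod>i\<in>{q,p}. emeasure M (X i))"
      using I A B by (intro P.emeasure_PiM_Collect) (auto simp: X_def)
    also have "\<dots> = emeasure M A * emeasure M B" using I by (simp add: X_def)
    finally show "emeasure M A * emeasure M B = emeasure (distr (PiM I (\<lambda>_. M)) (M \<Otimes>\<^sub>M M) (\<lambda>\<theta>. (\<theta> q, \<theta> p))) (A \<times> B)" ..
  qed
qed

abbreviation ee :: "real \<Rightarrow> complex" where "ee t \<equiv> exp (2 * of_real pi * \<i> * of_real t)"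

lemma vand_carrier: "vandermonde N N \<theta> \<in> carrier_mat N N"
  by (simp add: vandermonde_def)

lemma vand_eq: "vandermonde N N \<theta> = complex_of_real (1 / sqrt (real N)) \<cdot>\<^sub>m mat N N (\<lambda>(j,q). ee (\<theta> q) ^ j)"
proof (rule eq_matI)
  fix i j assume "i < dim_row (complex_of_real (1 / sqrt (real N)) \<cdot>\<^sub>m mat N N (\<lambda>(j,q). ee (\<theta> q) ^ j))"
    "j < dim_col (complex_of_real (1 / sqrt (real N)) \<cdot>\<^sub>m mat N N (\<lambda>(j,q). ee (\<theta> q) ^ j))"
  then have i: "i < N" and j: "j < N" by auto
  have "exp (2 * of_real pi * \<i> * of_nat i * of_real (\<theta> j)) = exp (of_nat i * (2 * of_real pi * \<i> * of_real (\<theta> j)))"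
    by (simp add: mult_ac)
  also have "\<dots> = ee (\<theta> j) ^ i" by (rule exp_of_nat_mult)
  finally show "vandermonde N N \<theta> $$ (i, j) = (complex_of_real (1 / sqrt (real N)) \<cdot>\<^sub>m mat N N (\<lambda>(j,q). ee (\<theta> q) ^ j)) $$ (i, j)"
    using i j by (simp add: vandermonde_def divide_inverse mult.commute)
qed (auto simp: vandermonde_def)

lemma det_vand: "Determinant.det (vandermonde N N \<theta>) =
   complex_of_real (1 / sqrt (real N)) ^ N * (\<Prod>q<N. \<Prod>p<q. (ee (\<theta> q) - ee (\<theta> p)))"
  unfolding vand_eq det_smult by (simp add: vandermonde_det)

lemma F_good:
  assumes N: "N \<ge> 1" and D: "\<forall>q<N. \<forall>p<q. ee (\<theta> q) \<noteq> ee (\<theta> p)"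
  shows "tr_N (matrix_log (mat_adjoint (vandermonde N N \<theta>) * vandermonde N N \<theta>)) =
    complex_of_real (- ln (real N) + 2 / real N * (\<Sum>q<N. \<Sum>p<q. ln (cmod (ee (\<theta> q) - ee (\<theta> p)))))"
proof -
  define c where "c = 1 / sqrt (real N)"
  have cpos: "c > 0" unfolding c_def using N by simp
  have dV: "Determinant.det (vandermonde N N \<theta>) = complex_of_real c ^ N * (\<Prod>q<N. \<Prod>p<q. (ee (\<theta> q) - ee (\<theta> p)))"
    unfolding c_def by (rule det_vand)
  have pne: "(\<Prod>q<N. \<Prod>p<q. (ee (\<theta> q) - ee (\<theta> p))) \<noteq> 0" using D by auto
  have dne: "Determinant.det (vandermonde N N \<theta>) \<noteq> 0" unfolding dV using pne cpos by simp
  have "tr_N (matrix_log (mat_adjoint (vandermonde N N \<theta>) * vandermonde N N \<theta>)) =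
      complex_of_real (2 * ln (cmod (Determinant.det (vandermonde N N \<theta>)))) / of_nat N"
    by (rule trlog_gram[OF vand_carrier dne])
  also have "cmod (Determinant.det (vandermonde N N \<theta>)) = c ^ N * (\<Prod>q<N. \<Prod>p<q. cmod (ee (\<theta> q) - ee (\<theta> p)))"
    unfolding dV using cpos by (simp add: norm_mult norm_power prod_norm)
  also have "ln (c ^ N * (\<Prod>q<N. \<Prod>p<q. cmod (ee (\<theta> q) - ee (\<theta> p))))
      = real N * ln c + (\<Sum>q<N. \<Sum>p<q. ln (cmod (ee (\<theta> q) - ee (\<theta> p))))"
  proof -
    have pos: "0 < cmod (ee (\<theta> q) - ee (\<theta> p))" if "q < N" "p < q" for q p using D that by auto
    have "ln (\<Prod>q<N. \<Prod>p<q. cmod (ee (\<theta> q) - ee (\<theta> p))) = (\<Sum>q<N. ln (\<Prod>p<q. cmod (ee (\<theta> q) - ee (\<theta> p))))"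
      using pos by (subst ln_prod) (auto intro!: prod_pos)
    also have "\<dots> = (\<Sum>q<N. \<Sum>p<q. ln (cmod (ee (\<theta> q) - ee (\<theta> p))))"
      using pos by (intro sum.cong refl) (subst ln_prod, auto)
    finally have lp: "ln (\<Prod>q<N. \<Prod>p<q. cmod (ee (\<theta> q) - ee (\<theta> p))) = (\<Sum>q<N. \<Sum>p<q. ln (cmod (ee (\<theta> q) - ee (\<theta> p))))" .
    have pp: "0 < (\<Prod>q<N. \<Prod>p<q. cmod (ee (\<theta> q) - ee (\<theta> p)))" using pos by (auto intro!: prod_pos)
    have "ln (c ^ N * (\<Prod>q<N. \<Prod>p<q. cmod (ee (\<theta> q) - ee (\<theta> p)))) = ln (c ^ N) + ln (\<Prod>q<N. \<Prod>p<q. cmod (ee (\<theta> q) - ee (\<theta> p)))"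
    proof -
      have A: "c ^ N \<noteq> 0" using cpos by simp
      have B: "(\<Prod>q<N. \<Prod>p<q. cmod (ee (\<theta> q) - ee (\<theta> p))) \<noteq> 0" using pp by linarith
      show ?thesis by (simp only: ln_mult A B simp_thms if_True)
    qed
    also have "ln (c ^ N) = real N * ln c" by (rule ln_realpow)
    finally show ?thesis unfolding lp .
  qed
  also have "ln c = - ln (real N) / 2" unfolding c_def using N by (simp add: ln_div ln_sqrt)
  finally have t: "tr_N (matrix_log (mat_adjoint (vandermonde N N \<theta>) * vandermonde N N \<theta>)) =
    complex_of_real (2 * (real N * (- ln (real N) / 2) + (\<Sum>q<N. \<Sum>p<q. ln (cmod (ee (\<theta> q) - ee (\<theta> p)))))) / of_nat N" .
  have r: "2 * (real N * (- ln (real N) / 2) + S) / real N = - ln (real N) + 2 / real N * S" for S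
    using N by (simp add: field_simps)
  show ?thesis unfolding t r[symmetric] by simp
qed

lemma F_bad:
  assumes D: "\<not> (\<forall>q<N. \<forall>p<q. ee (\<theta> q) \<noteq> ee (\<theta> p))"
  shows "tr_N (matrix_log (mat_adjoint (vandermonde N N \<theta>) * vandermonde N N \<theta>)) = tr_N (SOME L. False)"
proof -
  define V where "V = vandermonde N N \<theta>"
  have V: "V \<in> carrier_mat N N" unfolding V_def by (rule vand_carrier)
  define A where "A = mat_adjoint V * V"
  have A: "A \<in> carrier_mat N N" unfolding A_def using V by auto
  have "Determinant.det V = 0" unfolding V_def det_vand using D by auto
  then have dA: "Determinant.det A = 0" unfolding A_def using V by (simp add: det_mult[of _ N] det_adj)
  have no: "\<not> (\<exists>U d. U \<in> carrier_mat N N \<and> mat_adjoint U * U = 1\<^sub>m N \<and> (\<forall>i<N. 0 < d i) \<and>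
              A = U * real_diag_mat N d * mat_adjoint U \<and> L = U * real_diag_mat N (\<lambda>i. ln (d i)) * mat_adjoint U)" for L
  proof
    assume "\<exists>U d. U \<in> carrier_mat N N \<and> mat_adjoint U * U = 1\<^sub>m N \<and> (\<forall>i<N. 0 < d i) \<and>
              A = U * real_diag_mat N d * mat_adjoint U \<and> L = U * real_diag_mat N (\<lambda>i. ln (d i)) * mat_adjoint U"
    then obtain U d where U: "U \<in> carrier_mat N N" and UU: "mat_adjoint U * U = 1\<^sub>m N" and d: "\<forall>i<N. 0 < d i"
      and Aeq: "A = U * real_diag_mat N d * mat_adjoint U" by blast
    have "Determinant.det A = Determinant.det U * Determinant.det (real_diag_mat N d) * Determinant.det (mat_adjoint U)"
      unfolding Aeq using U by (simp add: det_mult[of _ N])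
    also have "Determinant.det (mat_adjoint U) * Determinant.det U = 1"
      using det_mult[OF adj_carrier[OF U] U] UU by simp
    then have "Determinant.det U * Determinant.det (real_diag_mat N d) * Determinant.det (mat_adjoint U) = Determinant.det (real_diag_mat N d)"
      by (simp add: algebra_simps)
    finally have "Determinant.det A = of_real (\<Prod>i<N. d i)" by (simp only: det_rdm)
    moreover have "(\<Prod>i<N. d i) \<noteq> 0" using d by auto
    ultimately show False using dA by simp
  qed
  have dr: "dim_row A = N" using A by simp
  have eqP: "(\<lambda>L. \<exists>U d. U \<in> carrier_mat (dim_row A) (dim_row A) \<and> mat_adjoint U * U = 1\<^sub>m (dim_row A) \<and>
      (\<forall>i < dim_row A. d i > 0) \<and> A = U * real_diag_mat (dim_row A) d * mat_adjoint U \<and>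
      L = U * real_diag_mat (dim_row A) (\<lambda>i. ln (d i)) * mat_adjoint U) = (\<lambda>L. False)"
    unfolding dr using no by (intro ext) blast
  have "matrix_log A = (SOME L. False)"
    unfolding matrix_log_def eqP ..
  then show ?thesis unfolding A_def V_def by simp
qed

lemma e_eq_int: assumes "ee s = ee t" shows "\<exists>k::int. t = s + of_int k"
proof -
  have "exp (2 * of_real pi * \<i> * of_real s - 2 * of_real pi * \<i> * of_real t) = 1"
    using assms by (simp add: exp_diff)
  then obtain n :: int where n: "Im (2 * of_real pi * \<i> * of_real s - 2 * of_real pi * \<i> * of_real t) = of_int (2 * n) * pi"
    unfolding exp_eq_1 by blast
  then have "2 * pi * (s - t) = 2 * of_int n * pi" by (simp add: algebra_simps)
  then have "pi * (2 * (s - t) - 2 * of_int n) = 0" by (simp add: algebra_simps)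
  then have "2 * (s - t) - 2 * of_int n = 0" using pi_gt_zero by simp
  then have "s - t = of_int n" by simp
  then show ?thesis by (intro exI[of _ "- n"]) simp
qed

context nuset
begin

lemma AE_pair_neq: "AE z in \<nu> \<Otimes>\<^sub>M \<nu>. ee (fst z) \<noteq> ee (snd z)"
proof -
  interpret nu: prob_space \<nu> by (rule nu_prob)
  interpret ps: pair_sigma_finite \<nu> \<nu>
    unfolding pair_sigma_finite_def using nu.sigma_finite_measure_axioms by simp
  have "AE s in \<nu>. AE t in \<nu>. ee (fst (s, t)) \<noteq> ee (snd (s, t))"
  proof (rule AE_I2)
    fix s :: real
    define Z where "Z = range (\<lambda>k::int. s + of_int k)"
    have "Z \<in> null_sets lborel" unfolding Z_def by (intro countable_imp_null_set_lborel) auto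
    then have "AE t in lborel. t \<notin> Z" by (rule AE_not_in)
    then have "AE t in \<nu>. t \<notin> Z" unfolding nu_def using dens_meas'
      by (subst AE_density) (auto elim: eventually_mono)
    then show "AE t in \<nu>. ee (fst (s, t)) \<noteq> ee (snd (s, t))"
    proof (rule eventually_mono)
      fix t assume "t \<notin> Z"
      then show "ee (fst (s, t)) \<noteq> ee (snd (s, t))" using e_eq_int[of s t] unfolding Z_def by auto
    qed
  qed
  then show ?thesis by (intro ps.AE_pair_measure) measurable
qed

lemma pair_facts:
  fixes N :: nat
  assumes q: "q < N" and p: "p < N" and qp: "q \<noteq> p"
  shows "AE \<theta> in PiM {..<N} (\<lambda>_. \<nu>). ee (\<theta> q) \<noteq> ee (\<theta> p)"
    and "integrable (PiM {..<N} (\<lambda>_. \<nu>)) (\<lambda>\<theta>. HH (\<theta> q, \<theta> p))"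
    and "integral\<^sup>L (PiM {..<N} (\<lambda>_. \<nu>)) (\<lambda>\<theta>. HH (\<theta> q, \<theta> p)) = integral\<^sup>L (\<nu> \<Otimes>\<^sub>M \<nu>) HH"
proof -
  have dist: "distr (PiM {..<N} (\<lambda>_. \<nu>)) (\<nu> \<Otimes>\<^sub>M \<nu>) (\<lambda>\<theta>. (\<theta> q, \<theta> p)) = \<nu> \<Otimes>\<^sub>M \<nu>"
    using q p qp by (intro pair_marg nu_prob) auto
  have meas: "(\<lambda>\<theta>. (\<theta> q, \<theta> p)) \<in> PiM {..<N} (\<lambda>_. \<nu>) \<rightarrow>\<^sub>M \<nu> \<Otimes>\<^sub>M \<nu>"
    by (intro measurable_Pair measurable_component_singleton) (use q p in auto)
  have "AE z in distr (PiM {..<N} (\<lambda>_. \<nu>)) (\<nu> \<Otimes>\<^sub>M \<nu>) (\<lambda>\<theta>. (\<theta> q, \<theta> p)). ee (fst z) \<noteq> ee (snd z)"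
    unfolding dist by (rule AE_pair_neq)
  moreover have sets: "{z \<in> space (\<nu> \<Otimes>\<^sub>M \<nu>). ee (fst z) \<noteq> ee (snd z)} \<in> sets (\<nu> \<Otimes>\<^sub>M \<nu>)"
    by measurable
  ultimately have "AE \<theta> in PiM {..<N} (\<lambda>_. \<nu>). ee (fst (\<theta> q, \<theta> p)) \<noteq> ee (snd (\<theta> q, \<theta> p))"
    using AE_distr_iff[OF meas sets] by simp
  then show "AE \<theta> in PiM {..<N} (\<lambda>_. \<nu>). ee (\<theta> q) \<noteq> ee (\<theta> p)" by simp
  have "integrable (distr (PiM {..<N} (\<lambda>_. \<nu>)) (\<nu> \<Otimes>\<^sub>M \<nu>) (\<lambda>\<theta>. (\<theta> q, \<theta> p))) HH"
    unfolding dist by (rule HH_int)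
  then show "integrable (PiM {..<N} (\<lambda>_. \<nu>)) (\<lambda>\<theta>. HH (\<theta> q, \<theta> p))"
    by (subst (asm) integrable_distr_eq[OF meas HH_meas]) 
  have "integral\<^sup>L (distr (PiM {..<N} (\<lambda>_. \<nu>)) (\<nu> \<Otimes>\<^sub>M \<nu>) (\<lambda>\<theta>. (\<theta> q, \<theta> p))) HH = integral\<^sup>L (PiM {..<N} (\<lambda>_. \<nu>)) (\<lambda>\<theta>. HH (\<theta> q, \<theta> p))"
    by (rule integral_distr[OF meas HH_meas])
  then show "integral\<^sup>L (PiM {..<N} (\<lambda>_. \<nu>)) (\<lambda>\<theta>. HH (\<theta> q, \<theta> p)) = integral\<^sup>L (\<nu> \<Otimes>\<^sub>M \<nu>) HH"
    unfolding dist by simp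
qed

lemma sum_lt: "(\<Sum>q<N. real q) = real N * (real N - 1) / 2"
  by (induct N) (auto simp: field_simps)

lemma main_loc:
  fixes N :: nat
  assumes N: "N \<ge> 1"
  shows "integrable (PiM {..<N} (\<lambda>_. \<nu>))
           (\<lambda>\<theta>. tr_N (matrix_log (mat_adjoint (vandermonde N N \<theta>) * vandermonde N N \<theta>)))
       \<and> integrable (\<nu> \<Otimes>\<^sub>M \<nu>) HH
       \<and> (\<integral>\<theta>. tr_N (matrix_log (mat_adjoint (vandermonde N N \<theta>) * vandermonde N N \<theta>))
             \<partial>(PiM {..<N} (\<lambda>_. \<nu>)))
         = complex_of_real ((real N - 1) * integral\<^sup>L (\<nu> \<Otimes>\<^sub>M \<nu>) HH - ln (real N))"
proof -
  define P where "P = PiM {..<N} (\<lambda>_. \<nu>)"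
  interpret P: prob_space P unfolding P_def by (intro prob_space_PiM nu_prob)
  define F where "F \<theta> = tr_N (matrix_log (mat_adjoint (vandermonde N N \<theta>) * vandermonde N N \<theta>))" for \<theta>
  define S where "S \<theta> = (\<Sum>q<N. \<Sum>p<q. ln (cmod (ee (\<theta> q) - ee (\<theta> p))))" for \<theta>
  define G where "G \<theta> = - ln (real N) + 2 / real N * S \<theta>" for \<theta>
  define D where "D \<theta> = (\<forall>q\<in>{..<N}. \<forall>p\<in>{..<q}. ee (\<theta> q) \<noteq> ee (\<theta> p))" for \<theta>
  define c0 where "c0 = tr_N (SOME L. False)"
  define E where "E = integral\<^sup>L (\<nu> \<Otimes>\<^sub>M \<nu>) HH"
  have Fpt: "F \<theta> = (if D \<theta> then complex_of_real (G \<theta>) else c0)" for \<theta>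
  proof (cases "D \<theta>")
    case True
    then show ?thesis unfolding F_def G_def S_def D_def using F_good[OF N, of \<theta>] by simp
  next
    case False
    have "F \<theta> = c0" unfolding F_def c0_def by (rule F_bad) (use False in \<open>auto simp: D_def\<close>)
    with False show ?thesis by simp
  qed
  have pint: "integrable P (\<lambda>\<theta>. ln (cmod (ee (\<theta> q) - ee (\<theta> p))))"
    and pval: "integral\<^sup>L P (\<lambda>\<theta>. ln (cmod (ee (\<theta> q) - ee (\<theta> p)))) = E"
    if "q < N" "p < q" for q p
    using pair_facts[of q N p] that unfolding P_def E_def by auto
  have Sint: "integrable P S" unfolding S_def
    by (intro Bochner_Integration.integrable_sum pint) auto
  have Sval: "integral\<^sup>L P S = E * (real N * (real N - 1) / 2)"
  proof -
    have i1: "integrable P (\<lambda>\<theta>. \<Sum>p<q. ln (cmod (ee (\<theta> q) - ee (\<theta> p))))" if "q < N" for q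
      using that by (intro Bochner_Integration.integrable_sum pint) auto
    have "integral\<^sup>L P S = (\<Sum>q<N. integral\<^sup>L P (\<lambda>\<theta>. \<Sum>p<q. ln (cmod (ee (\<theta> q) - ee (\<theta> p)))))"
      unfolding S_def by (rule Bochner_Integration.integral_sum) (use i1 in auto)
    also have "\<dots> = (\<Sum>q<N. \<Sum>p<q. integral\<^sup>L P (\<lambda>\<theta>. ln (cmod (ee (\<theta> q) - ee (\<theta> p)))))"
      by (intro sum.cong refl Bochner_Integration.integral_sum) (auto intro: pint)
    also have "\<dots> = (\<Sum>q<N. \<Sum>p<q. E)" by (intro sum.cong refl) (auto simp: pval)
    also have "\<dots> = E * (\<Sum>q<N. real q)" by (simp add: sum_distrib_left mult.commute)
    finally show ?thesis by (simp add: sum_lt)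
  qed
  have Gint: "integrable P G" unfolding G_def
    by (intro Bochner_Integration.integrable_add integrable_mult_right Sint) auto
  have Gval: "integral\<^sup>L P G = (real N - 1) * E - ln (real N)"
  proof -
    have "integral\<^sup>L P G = - ln (real N) + 2 / real N * integral\<^sup>L P S"
      unfolding G_def using Sint by (simp add: P.prob_space)
    also have "\<dots> = (real N - 1) * E - ln (real N)" unfolding Sval using N by (simp add: field_simps)
    finally show ?thesis .
  qed
  have AED: "AE \<theta> in P. D \<theta>"
  proof -
    have "\<forall>q\<in>{..<N}. \<forall>p\<in>{..<q}. AE \<theta> in P. ee (\<theta> q) \<noteq> ee (\<theta> p)"
      using pair_facts(1) unfolding P_def by auto
    then have "\<forall>q\<in>{..<N}. AE \<theta> in P. \<forall>p\<in>{..<q}. ee (\<theta> q) \<noteq> ee (\<theta> p)"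
      by (simp add: AE_finite_all)
    then show ?thesis unfolding D_def by (simp add: AE_finite_all)
  qed
  have Gm: "G \<in> borel_measurable P" using Gint by (rule borel_measurable_integrable)
  have em: "(\<lambda>\<theta>. ee (\<theta> q)) \<in> borel_measurable P" if "q < N" for q
  proof -
    have "(\<lambda>\<theta>. \<theta> q) \<in> P \<rightarrow>\<^sub>M \<nu>" unfolding P_def by (rule measurable_component_singleton) (use that in simp)
    moreover have "ee \<in> borel_measurable \<nu>" by measurable
    ultimately show ?thesis by (rule measurable_compose)
  qed
  have pe: "Measurable.pred P (\<lambda>\<theta>. ee (\<theta> q) \<noteq> ee (\<theta> p))" if "q < N" "p < N" for q p
  proof -
    have "Measurable.pred P (\<lambda>\<theta>. ee (\<theta> q) = ee (\<theta> p))"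
      unfolding pred_def by (rule measurable_equality_set) (use em that in auto)
    then show ?thesis by (rule pred_intros_logic)
  qed
  have Dp: "Measurable.pred P D" unfolding D_def
    by (intro pred_intros_finite) (auto intro!: pe)
  then have Dm: "{\<theta> \<in> space P. D \<theta>} \<in> sets P" unfolding pred_def .
  have Fm: "F \<in> borel_measurable P"
    unfolding Fpt[abs_def] using Gm Dm by measurable
  have oGm: "(\<lambda>\<theta>. complex_of_real (G \<theta>)) \<in> borel_measurable P" using Gm by measurable
  have AEeq: "AE \<theta> in P. F \<theta> = complex_of_real (G \<theta>)"
    using AED by eventually_elim (simp add: Fpt)
  have Fint: "integrable P F"
    using integrable_cong_AE[OF Fm oGm AEeq] Gint by (simp add: integrable_of_real)
  have Fval: "integral\<^sup>L P F = complex_of_real ((real N - 1) * E - ln (real N))"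
    using integral_cong_AE[OF Fm oGm AEeq] Gint Gval by (simp add: integral_of_real)
  show ?thesis using Fint Fval HH_int unfolding P_def F_def E_def by simp
qed

end

theorem mainTheorem2:
  fixes N :: nat and f :: "real \<Rightarrow> real" and \<nu> :: "real measure"
  assumes N: "N \<ge> 1"
    and f_cont: "continuous_on {0..1} f"
    and f_nonneg: "\<And>x. x \<in> {0..1} \<Longrightarrow> f x \<ge> 0"
    and f_int: "integral {0..1} f = 1"
    and nu_def: "\<nu> = density lborel (\<lambda>x. ennreal (f x * indicator {0..1} x))"
  shows "integrable (PiM {..<N} (\<lambda>_. \<nu>))
           (\<lambda>\<theta>. tr_N (matrix_log (mat_adjoint (vandermonde N N \<theta>) * vandermonde N N \<theta>)))
       \<and> integrable (\<nu> \<Otimes>\<^sub>M \<nu>)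
           (\<lambda>(t1, t2). ln (cmod (exp (2 * of_real pi * \<i> * of_real t1) - exp (2 * of_real pi * \<i> * of_real t2))))
       \<and> (\<integral>\<theta>. tr_N (matrix_log (mat_adjoint (vandermonde N N \<theta>) * vandermonde N N \<theta>))
             \<partial>(PiM {..<N} (\<lambda>_. \<nu>)))
         = complex_of_real
             ((real N - 1) * (\<integral>(t1, t2). ln (cmod (exp (2 * of_real pi * \<i> * of_real t1)
                                                    - exp (2 * of_real pi * \<i> * of_real t2))) \<partial>(\<nu> \<Otimes>\<^sub>M \<nu>))
              - ln (real N))"
proof -
  interpret nuset f \<nu> by (rule nuset.intro) (fact f_cont, fact f_nonneg, fact f_int, fact nu_def)
  show ?thesis using main_loc[OF N] by simp
qed

end
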